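(* Let $p>1$ and let $\varphi:\mathbb R\to\mathbb C$ satisfy $|\varphi(x)|\le Ce^{-|x|}$ for some $C>0$. For each $u_0\in B_p^{\mathbb R}(\mathbb R)$ there exists a constant $C(u_0)>0$ such that every $u\in B_p(\mathbb R)$ with $\|u-u_0\|_{B_p}\le C_{JN}/4$ satisfies $$\frac1{|I|}\int_Ie^{|u(t)-u_I|}dt\le C(u_0)$$ for all bounded intervals $I\subset\mathbb R$. Likewise, there is a constant $C'(u_0)>0$ such that every such $u$ satisfies $\int_{\mathbb R}|\varphi_y(x-t)|e^{|u(t)-u_{I(x,y)}|}dt\le C'(u_0)$ for all $x\in\mathbb R$, $y>0$.
   Context: $B_p(\mathbb R)$: measurable $u:\mathbb R\to\mathbb C$ (modulo constants) with $\|u\|_{B_p}^p=\int\!\int\frac{|u(t)-u(s)|^p}{|t-s|^2}dsdt<\infty$; $B_p^{\mathbb R}(\mathbb R)$ its real-valued elements. $u_I=|I|^{-1}\int_Iu$; $\|u\|_*=\sup_I|I|^{-1}\int_I|u-u_I|$. $C_0,C_{JN}>0$ are universal constants with $|I|^{-1}|\{t\in I:|u(t)-u_I|\ge\lambda\}|\le C_0\exp(-C_{JN}\lambda/\|u\|_* )$ for all BMO $u$, bounded $I$, $\lambda>0$. $\varphi_y(x)=y^{-1}\varphi(x/y)$, $I(x,y)=(x-y,x+y)$. *)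

theory Defs
  imports "HOL-Analysis.Analysis"
begin

definition Bp_energy :: "real \<Rightarrow> (real \<Rightarrow> complex) \<Rightarrow> ennreal" where
  "Bp_energy p u = (\<integral>\<^sup>+ t. (\<integral>\<^sup>+ s. ennreal (cmod (u t - u s) powr p / \<bar>t - s\<bar>\<^sup>2) \<partial>lborel) \<partial>lborel)"

definition in_Bp :: "real \<Rightarrow> (real \<Rightarrow> complex) \<Rightarrow> bool" where
  "in_Bp p u \<longleftrightarrow> u \<in> borel_measurable lborel \<and> Bp_energy p u < \<infinity>"

definition Bp_norm :: "real \<Rightarrow> (real \<Rightarrow> complex) \<Rightarrow> real" where
  "Bp_norm p u = enn2real (Bp_energy p u) powr (1 / p)"

definition avg :: "(real \<Rightarrow> complex) \<Rightarrow> real \<Rightarrow> real \<Rightarrow> complex" where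
  "avg u a b = (\<integral> t\<in>{a<..<b}. u t \<partial>lborel) / of_real (b - a)"

definition bmo_norm :: "(real \<Rightarrow> complex) \<Rightarrow> ennreal" where
  "bmo_norm u = (SUP ab \<in> {(a, b). a < (b::real)}.
      (\<integral>\<^sup>+ t\<in>{fst ab<..<snd ab}. ennreal (cmod (u t - avg u (fst ab) (snd ab))) \<partial>lborel)
        / ennreal (snd ab - fst ab))"

definition in_BMO :: "(real \<Rightarrow> complex) \<Rightarrow> bool" where
  "in_BMO u \<longleftrightarrow> u \<in> borel_measurable lborel \<and>
     (\<forall>a b. set_integrable lborel {a<..<b} u) \<and> bmo_norm u < \<infinity>"

definition JN_constants :: "real \<Rightarrow> real \<Rightarrow> bool" where
  "JN_constants C0 CJN \<longleftrightarrow> C0 > 0 \<and> CJN > 0 \<and>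
     (\<forall>u a b lam. in_BMO u \<and> a < b \<and> lam > 0 \<longrightarrow>
        measure lborel {t \<in> {a<..<b}. cmod (u t - avg u a b) \<ge> lam} / (b - a)
          \<le> C0 * exp (- CJN * lam / enn2real (bmo_norm u)))"

end

theory Submission
  imports Defs
begin


lemma young_beta:
  fixes X b p :: real
  assumes "0 \<le> X" "b > 0" "p > 1"
  shows "X \<le> X powr p * b powr (1 - p) / p + b * (1 - 1/p)"
proof -
  define q where "q = p / (p - 1)"
  have q1: "q > 1" using assms by (simp add: q_def)
  have pq: "1/p + 1/q = 1" using assms by (simp add: q_def field_simps)
  have "(X/b) * 1 \<le> (X/b) powr p / p + 1 powr q / q"
    by (rule Youngs_inequality) (use assms q1 pq in auto)
  hence "X/b \<le> (X/b) powr p / p + (1 - 1/p)" using pq by simp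
  hence "b * (X/b) \<le> b * ((X/b) powr p / p + (1 - 1/p))" using assms by (intro mult_left_mono) auto
  also have "b * ((X/b) powr p / p + (1 - 1/p)) = X powr p * b powr (1 - p) / p + b * (1 - 1/p)"
    using assms by (simp add: powr_divide powr_diff field_simps)
  finally show ?thesis using assms by simp
qed



lemma emeasure_Ioo[simp]: "a \<le> b \<Longrightarrow> emeasure lborel {a<..<b::real} = ennreal (b - a)"
  by simp

lemma loc_pow:
  fixes f :: "real \<Rightarrow> complex"
  assumes fm[measurable]: "f \<in> borel_measurable lborel" and ab: "a < b" and p: "p > 1"
  shows "(\<integral>\<^sup>+t\<in>{a<..<b}. (\<integral>\<^sup>+s\<in>{a<..<b}. ennreal (cmod (f t - f s) powr p) \<partial>lborel) \<partial>lborel)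
     \<le> ennreal ((b-a)^2) * Bp_energy p f"
proof -
  have pt: "ennreal (cmod (f t - f s) powr p) * indicator {a<..<b} s * indicator {a<..<b} t
     \<le> ennreal ((b-a)^2) * ennreal (cmod (f t - f s) powr p / \<bar>t - s\<bar>\<^sup>2)" for t s
  proof (cases "t \<in> {a<..<b} \<and> s \<in> {a<..<b}")
    case True
    show ?thesis
    proof (cases "t = s")
      case True then show ?thesis by simp
    next
      case False
      have d: "\<bar>t - s\<bar>\<^sup>2 \<le> (b-a)^2" using True by (intro power_mono) auto
      have pos: "\<bar>t - s\<bar>\<^sup>2 > 0" using False by simp
      have "cmod (f t - f s) powr p \<le> (b-a)^2 * (cmod (f t - f s) powr p / \<bar>t - s\<bar>\<^sup>2)"
        using d pos by (simp add: field_simps mult_right_mono)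
      then show ?thesis using True by (simp add: ennreal_mult[symmetric])
    qed
  next
    case False then show ?thesis by (auto split: split_indicator)
  qed
  have "(\<integral>\<^sup>+t\<in>{a<..<b}. (\<integral>\<^sup>+s\<in>{a<..<b}. ennreal (cmod (f t - f s) powr p) \<partial>lborel) \<partial>lborel)
     = (\<integral>\<^sup>+t. (\<integral>\<^sup>+s. ennreal (cmod (f t - f s) powr p) * indicator {a<..<b} s * indicator {a<..<b} t \<partial>lborel) \<partial>lborel)"
    by (simp add: nn_integral_multc)
  also have "\<dots> \<le> (\<integral>\<^sup>+t. (\<integral>\<^sup>+s. ennreal ((b-a)^2) * ennreal (cmod (f t - f s) powr p / \<bar>t - s\<bar>\<^sup>2) \<partial>lborel) \<partial>lborel)"
    by (intro nn_integral_mono pt)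
  also have "\<dots> = ennreal ((b-a)^2) * Bp_energy p f"
    unfolding Bp_energy_def by (simp add: nn_integral_cmult)
  finally show ?thesis .
qed



lemma loc_abs:
  fixes f :: "real \<Rightarrow> complex"
  assumes fm[measurable]: "f \<in> borel_measurable lborel" and ab: "a < b" and p: "p > 1"
    and bpos: "\<beta> > 0" and E: "Bp_energy p f \<le> ennreal (\<beta> powr p)"
  shows "(\<integral>\<^sup>+t\<in>{a<..<b}. (\<integral>\<^sup>+s\<in>{a<..<b}. ennreal (cmod (f t - f s)) \<partial>lborel) \<partial>lborel)
     \<le> ennreal ((b-a)^2 * \<beta>)"
proof -
  define c1 where "c1 = \<beta> powr (1 - p) / p"
  define c2 where "c2 = \<beta> * (1 - 1/p)"
  have c1: "c1 \<ge> 0" and c2: "c2 \<ge> 0" using p bpos by (auto simp: c1_def c2_def)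
  have pt: "ennreal (cmod (f t - f s)) \<le> ennreal c1 * ennreal (cmod (f t - f s) powr p) + ennreal c2" for t s
  proof -
    have "cmod (f t - f s) \<le> c1 * cmod (f t - f s) powr p + c2"
      using young_beta[of "cmod (f t - f s)" \<beta> p] p bpos by (simp add: c1_def c2_def mult.commute)
    then show ?thesis using c1 c2 by (simp add: ennreal_mult[symmetric] ennreal_plus[symmetric] del: ennreal_plus)
  qed
  have "(\<integral>\<^sup>+t\<in>{a<..<b}. (\<integral>\<^sup>+s\<in>{a<..<b}. ennreal (cmod (f t - f s)) \<partial>lborel) \<partial>lborel)
     \<le> (\<integral>\<^sup>+t\<in>{a<..<b}. (\<integral>\<^sup>+s\<in>{a<..<b}. ennreal c1 * ennreal (cmod (f t - f s) powr p) + ennreal c2 \<partial>lborel) \<partial>lborel)"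
    by (intro nn_integral_mono mult_right_mono pt) auto
  also have "\<dots> = (\<integral>\<^sup>+t\<in>{a<..<b}. ennreal c1 * (\<integral>\<^sup>+s\<in>{a<..<b}. ennreal (cmod (f t - f s) powr p) \<partial>lborel) + ennreal c2 * ennreal (b - a) \<partial>lborel)"
    using ab by (simp add: distrib_right nn_integral_add nn_integral_cmult mult.assoc nn_integral_cmult_indicator)
  also have "\<dots> = ennreal c1 * (\<integral>\<^sup>+t\<in>{a<..<b}. (\<integral>\<^sup>+s\<in>{a<..<b}. ennreal (cmod (f t - f s) powr p) \<partial>lborel) \<partial>lborel) + ennreal c2 * ennreal (b - a) * ennreal (b - a)"
    using ab by (simp add: distrib_right nn_integral_add nn_integral_cmult mult.assoc nn_integral_cmult_indicator)
  also have "\<dots> \<le> ennreal c1 * (ennreal ((b-a)^2) * ennreal (\<beta> powr p)) + ennreal c2 * ennreal (b - a) * ennreal (b - a)"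
    by (intro add_mono mult_left_mono order.trans[OF loc_pow[OF fm ab p]]) (auto intro: E)
  also have "\<dots> = ennreal (c1 * ((b-a)^2 * \<beta> powr p) + c2 * (b - a) * (b - a))"
    using c1 c2 ab by (simp add: ennreal_mult ennreal_plus)
  also have "c1 * ((b-a)^2 * \<beta> powr p) + c2 * (b - a) * (b - a) = (b-a)^2 * (c1 * \<beta> powr p + c2)"
    by (simp add: algebra_simps power2_eq_square)
  also have "c1 * \<beta> powr p + c2 = \<beta>"
    using p bpos by (simp add: c1_def c2_def powr_diff field_simps)
  finally show ?thesis .
qed




lemma loc_integrable:
  fixes f :: "real \<Rightarrow> complex"
  assumes fm[measurable]: "f \<in> borel_measurable lborel" and ab: "a < b"
    and fin: "(\<integral>\<^sup>+t\<in>{a<..<b}. (\<integral>\<^sup>+s\<in>{a<..<b}. ennreal (cmod (f t - f s)) \<partial>lborel) \<partial>lborel) < \<infinity>"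
  shows "set_integrable lborel {a<..<b} f"
proof -
  have "AE t in lborel. (\<integral>\<^sup>+s\<in>{a<..<b}. ennreal (cmod (f t - f s)) \<partial>lborel) * indicator {a<..<b} t \<noteq> \<infinity>"
    using nn_integral_PInf_AE[of "\<lambda>t. (\<integral>\<^sup>+s\<in>{a<..<b}. ennreal (cmod (f t - f s)) \<partial>lborel) * indicator {a<..<b} t" lborel] fin
    by simp
  then obtain N where N: "N \<in> null_sets lborel"
    and sub: "{t \<in> space lborel. \<not> ((\<integral>\<^sup>+s\<in>{a<..<b}. ennreal (cmod (f t - f s)) \<partial>lborel) * indicator {a<..<b} t \<noteq> \<infinity>)} \<subseteq> N"
    by (auto simp: eventually_ae_filter)
  have "\<exists>t0\<in>{a<..<b}. (\<integral>\<^sup>+s\<in>{a<..<b}. ennreal (cmod (f t0 - f s)) \<partial>lborel) \<noteq> \<infinity>"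
  proof (rule ccontr)
    assume "\<not> ?thesis"
    then have "{a<..<b} \<subseteq> N" using sub by auto
    then have "emeasure lborel {a<..<b} \<le> emeasure lborel N"
      using N by (intro emeasure_mono) auto
    moreover have "emeasure lborel N = 0" using N by auto
    ultimately show False using ab by simp
  qed
  then obtain t0 where t0: "t0 \<in> {a<..<b}"
    and fin0: "(\<integral>\<^sup>+s\<in>{a<..<b}. ennreal (cmod (f t0 - f s)) \<partial>lborel) \<noteq> \<infinity>" by blast
  have "(\<integral>\<^sup>+s. ennreal (norm (indicator {a<..<b} s *\<^sub>R f s)) \<partial>lborel)
      \<le> (\<integral>\<^sup>+s. ennreal (cmod (f t0 - f s)) * indicator {a<..<b} s + ennreal (cmod (f t0)) * indicator {a<..<b} s \<partial>lborel)"
  proof (intro nn_integral_mono)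
    fix s
    have "cmod (f s) \<le> cmod (f t0 - f s) + cmod (f t0)"
      using norm_triangle_ineq4[of "f t0" "f t0 - f s"] by (simp add: add.commute)
    then show "ennreal (norm (indicator {a<..<b} s *\<^sub>R f s))
      \<le> ennreal (cmod (f t0 - f s)) * indicator {a<..<b} s + ennreal (cmod (f t0)) * indicator {a<..<b} s"
    proof (cases "s \<in> {a<..<b}")
      case True
      then show ?thesis using \<open>cmod (f s) \<le> _\<close>
        by (simp add: ennreal_plus[symmetric] del: ennreal_plus)
    qed simp
  qed
  also have "\<dots> = (\<integral>\<^sup>+s\<in>{a<..<b}. ennreal (cmod (f t0 - f s)) \<partial>lborel) + ennreal (cmod (f t0)) * ennreal (b - a)"
    using ab by (simp add: nn_integral_add nn_integral_cmult_indicator)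
  also have "\<dots> < \<infinity>" using fin0 by (simp add: less_top ennreal_mult_less_top)
  finally show ?thesis
    unfolding set_integrable_def by (intro integrableI_bounded) auto
qed




lemma loc_osc_pt:
  fixes f :: "real \<Rightarrow> complex"
  assumes fm[measurable]: "f \<in> borel_measurable lborel" and ab: "a < b"
    and fi: "set_integrable lborel {a<..<b} f"
  shows "ennreal (cmod (f t - avg f a b)) \<le> ennreal (1/(b-a)) * (\<integral>\<^sup>+s\<in>{a<..<b}. ennreal (cmod (f t - f s)) \<partial>lborel)"
proof -
  have ci: "set_integrable lborel {a<..<b} (\<lambda>s. f t)"
    using ab by (simp add: set_integrable_def)
  have "(LINT s:{a<..<b}|lborel. (f t - f s)) = (LINT s:{a<..<b}|lborel. f t) - (LINT s:{a<..<b}|lborel. f s)"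
    by (rule set_integral_diff(2)[OF ci fi])
  also have "(LINT s:{a<..<b}|lborel. f t) = of_real (b - a) * f t"
    using ab by (simp add: set_integral_const scaleR_conv_of_real)
  finally have eq: "f t - avg f a b = (LINT s:{a<..<b}|lborel. (f t - f s)) / of_real (b - a)"
    using ab unfolding avg_def by (simp add: field_simps)
  have "ennreal (cmod (LINT s:{a<..<b}|lborel. (f t - f s))) \<le> (\<integral>\<^sup>+s. ennreal (norm (indicator {a<..<b} s *\<^sub>R (f t - f s))) \<partial>lborel)"
    unfolding set_lebesgue_integral_def
    by (rule integral_norm_bound_ennreal) (use set_integral_diff(1)[OF ci fi] in \<open>simp add: set_integrable_def\<close>)
  also have "\<dots> = (\<integral>\<^sup>+s\<in>{a<..<b}. ennreal (cmod (f t - f s)) \<partial>lborel)"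
    by (intro nn_integral_cong) (auto split: split_indicator)
  finally have bnd: "ennreal (cmod (LINT s:{a<..<b}|lborel. (f t - f s))) \<le> (\<integral>\<^sup>+s\<in>{a<..<b}. ennreal (cmod (f t - f s)) \<partial>lborel)" .
  have "ennreal (cmod (f t - avg f a b)) = ennreal (1/(b-a)) * ennreal (cmod (LINT s:{a<..<b}|lborel. (f t - f s)))"
    using ab by (simp add: eq norm_divide ennreal_mult[symmetric] of_real_diff[symmetric] del: of_real_diff)
  also have "\<dots> \<le> ennreal (1/(b-a)) * (\<integral>\<^sup>+s\<in>{a<..<b}. ennreal (cmod (f t - f s)) \<partial>lborel)"
    by (intro mult_left_mono bnd) auto
  finally show ?thesis .
qed




lemma bp_int:
  fixes f :: "real \<Rightarrow> complex"
  assumes fm[measurable]: "f \<in> borel_measurable lborel" and p: "p > 1" and bpos: "\<beta> > 0"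
    and E: "Bp_energy p f \<le> ennreal (\<beta> powr p)"
  shows "set_integrable lborel {a<..<b} f"
proof (cases "a < b")
  case True
  show ?thesis
    by (rule loc_integrable[OF fm True])
       (rule le_less_trans[OF loc_abs[OF fm True p bpos E]], simp)
next
  case False
  then have "{a<..<b} = {}" by auto
  then show ?thesis by (simp add: set_integrable_def)
qed

lemma bp_osc:
  fixes f :: "real \<Rightarrow> complex"
  assumes fm[measurable]: "f \<in> borel_measurable lborel" and p: "p > 1" and bpos: "\<beta> > 0"
    and E: "Bp_energy p f \<le> ennreal (\<beta> powr p)" and ab: "a < b"
  shows "(\<integral>\<^sup>+t\<in>{a<..<b}. ennreal (cmod (f t - avg f a b)) \<partial>lborel) \<le> ennreal ((b-a)*\<beta>)"
proof -
  have fi: "set_integrable lborel {a<..<b} f" by (rule bp_int[OF fm p bpos E])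
  have "(\<integral>\<^sup>+t\<in>{a<..<b}. ennreal (cmod (f t - avg f a b)) \<partial>lborel)
     \<le> (\<integral>\<^sup>+t\<in>{a<..<b}. ennreal (1/(b-a)) * (\<integral>\<^sup>+s\<in>{a<..<b}. ennreal (cmod (f t - f s)) \<partial>lborel) \<partial>lborel)"
    by (intro nn_integral_mono mult_right_mono loc_osc_pt[OF fm ab fi]) auto
  also have "\<dots> = ennreal (1/(b-a)) * (\<integral>\<^sup>+t\<in>{a<..<b}. (\<integral>\<^sup>+s\<in>{a<..<b}. ennreal (cmod (f t - f s)) \<partial>lborel) \<partial>lborel)"
    by (simp add: nn_integral_cmult mult.assoc)
  also have "\<dots> \<le> ennreal (1/(b-a)) * ennreal ((b-a)^2 * \<beta>)"
    by (intro mult_left_mono loc_abs[OF fm ab p bpos E]) auto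
  also have "\<dots> = ennreal ((b-a)*\<beta>)"
    using ab bpos by (simp add: ennreal_mult[symmetric] power2_eq_square)
  finally show ?thesis .
qed

lemma bp_BMO:
  fixes f :: "real \<Rightarrow> complex"
  assumes fm[measurable]: "f \<in> borel_measurable lborel" and p: "p > 1" and bpos: "\<beta> > 0"
    and E: "Bp_energy p f \<le> ennreal (\<beta> powr p)"
  shows "in_BMO f" "bmo_norm f \<le> ennreal \<beta>"
proof -
  show le: "bmo_norm f \<le> ennreal \<beta>"
    unfolding bmo_norm_def
  proof (intro SUP_least, clarsimp)
    fix a b :: real assume ab: "a < b"
    show "(\<integral>\<^sup>+t\<in>{a<..<b}. ennreal (cmod (f t - avg f a b)) \<partial>lborel) / ennreal (b - a) \<le> ennreal \<beta>"
    proof (intro divide_le_posI_ennreal)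
      have "ennreal (b - a) * ennreal \<beta> = ennreal ((b-a)*\<beta>)"
        using ab bpos by (simp add: ennreal_mult)
      then show "(\<integral>\<^sup>+t\<in>{a<..<b}. ennreal (cmod (f t - avg f a b)) \<partial>lborel) \<le> ennreal (b - a) * ennreal \<beta>"
        using bp_osc[OF fm p bpos E ab] by simp
    qed (use ab in simp)
  qed
  show "in_BMO f"
    unfolding in_BMO_def using bp_int[OF fm p bpos E] le by (auto intro: le_less_trans[OF le])
qed




lemma jn_tail:
  fixes f :: "real \<Rightarrow> complex"
  assumes JN: "JN_constants C0 CJN" and fB: "in_BMO f" and bm: "bmo_norm f \<le> ennreal (CJN/4)"
    and ab: "a < b" and lam: "lam > 0"
  shows "emeasure lborel {t \<in> {a<..<b}. cmod (f t - avg f a b) \<ge> lam} \<le> ennreal (C0 * (b-a) * exp (-4*lam))"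
proof -
  have fm[measurable]: "f \<in> borel_measurable lborel" using fB by (simp add: in_BMO_def)
  have C0: "C0 > 0" and CJN: "CJN > 0" using JN by (auto simp: JN_constants_def)
  have sm[measurable]: "{t \<in> {a<..<b}. cmod (f t - avg f a b) \<ge> lam} \<in> sets lborel" by measurable
  have fin: "emeasure lborel {t \<in> {a<..<b}. cmod (f t - avg f a b) \<ge> lam} \<le> ennreal (b - a)"
  proof -
    have "emeasure lborel {t \<in> {a<..<b}. cmod (f t - avg f a b) \<ge> lam} \<le> emeasure lborel {a<..<b}"
      by (intro emeasure_mono) auto
    then show ?thesis using ab by simp
  qed
  show ?thesis
  proof (cases "bmo_norm f = 0")
    case True
    have "(\<integral>\<^sup>+t\<in>{a<..<b}. ennreal (cmod (f t - avg f a b)) \<partial>lborel) / ennreal (b - a) \<le> bmo_norm f"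
      unfolding bmo_norm_def using ab by (intro SUP_upper2[of "(a,b)"]) auto
    with True have z: "(\<integral>\<^sup>+t\<in>{a<..<b}. ennreal (cmod (f t - avg f a b)) \<partial>lborel) = 0"
      by simp
    have "emeasure lborel {t \<in> {a<..<b}. 1 \<le> ennreal (1/lam) * ennreal (cmod (f t - avg f a b))}
       \<le> ennreal (1/lam) * (\<integral>\<^sup>+t. ennreal (cmod (f t - avg f a b)) * indicator {a<..<b} t \<partial>lborel)"
      by (intro nn_integral_Markov_inequality) auto
    also have "\<dots> = 0" using z by simp
    finally have m0: "emeasure lborel {t \<in> {a<..<b}. 1 \<le> ennreal (1/lam) * ennreal (cmod (f t - avg f a b))} = 0"
      by simp
    have "{t \<in> {a<..<b}. cmod (f t - avg f a b) \<ge> lam} \<subseteq> {t \<in> {a<..<b}. 1 \<le> ennreal (1/lam) * ennreal (cmod (f t - avg f a b))}"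
    proof -
      have key: "1 \<le> ennreal (1/lam) * ennreal (cmod (f t - avg f a b))" if "lam \<le> cmod (f t - avg f a b)" for t
      proof -
        have "1 \<le> (1/lam) * cmod (f t - avg f a b)" using lam that by (simp add: field_simps)
        then show ?thesis
          using lam by (simp add: ennreal_mult[symmetric])
      qed
      show ?thesis using key by blast
    qed
    then have "emeasure lborel {t \<in> {a<..<b}. cmod (f t - avg f a b) \<ge> lam} = 0"
      using m0 emeasure_mono[OF _ _, of "{t \<in> {a<..<b}. cmod (f t - avg f a b) \<ge> lam}" "{t \<in> {a<..<b}. 1 \<le> ennreal (1/lam) * ennreal (cmod (f t - avg f a b))}" lborel]
      by simp
    then show ?thesis by simp
  next
    case False
    define m where "m = enn2real (bmo_norm f)"
    have "bmo_norm f < \<infinity>" using fB by (simp add: in_BMO_def)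
    then have bm_eq: "bmo_norm f = ennreal m" unfolding m_def by (simp add: less_top)
    have m0: "m > 0" using False bm_eq m_def by (metis enn2real_nonneg ennreal_0 order_le_less)
    have m4: "m \<le> CJN/4" using bm bm_eq CJN by simp
    have "measure lborel {t \<in> {a<..<b}. cmod (f t - avg f a b) \<ge> lam} / (b - a) \<le> C0 * exp (- CJN * lam / m)"
      using conjunct2[OF conjunct2[OF JN[unfolded JN_constants_def]], rule_format, of f a b lam] fB ab lam
      unfolding m_def by blast
    also have "\<dots> \<le> C0 * exp (-4*lam)"
    proof -
      have "4 * lam \<le> CJN * lam / m" using m0 m4 lam by (simp add: field_simps)
      then show ?thesis using C0 by simp
    qed
    finally have "measure lborel {t \<in> {a<..<b}. cmod (f t - avg f a b) \<ge> lam} \<le> C0 * (b-a) * exp (-4*lam)"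
      using ab by (simp add: field_simps)
    moreover have "emeasure lborel {t \<in> {a<..<b}. cmod (f t - avg f a b) \<ge> lam} = ennreal (measure lborel {t \<in> {a<..<b}. cmod (f t - avg f a b) \<ge> lam})"
      using fin by (intro emeasure_eq_ennreal_measure) (auto simp: top_unique)
    ultimately show ?thesis by (simp add: ennreal_leI)
  qed
qed




lemma ennreal_le_suminf: "(g k :: ennreal) \<le> (\<Sum>i. g i)"
  by (metis ennreal_suminf_lessD not_le order_less_irrefl)

lemma exp_int:
  fixes f :: "real \<Rightarrow> complex"
  assumes JN: "JN_constants C0 CJN" and fB: "in_BMO f" and bm: "bmo_norm f \<le> ennreal (CJN/4)"
    and ab: "a < b"
  shows "(\<integral>\<^sup>+t\<in>{a<..<b}. ennreal (exp (2 * cmod (f t - avg f a b))) \<partial>lborel)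
     \<le> ennreal ((b-a) * (exp 2 + C0 / (1 - exp (-2))))"
proof -
  have fm[measurable]: "f \<in> borel_measurable lborel" using fB by (simp add: in_BMO_def)
  have C0: "C0 > 0" using JN by (auto simp: JN_constants_def)
  define X where "X t = cmod (f t - avg f a b)" for t
  have Xm[measurable]: "X \<in> borel_measurable lborel" unfolding X_def by measurable
  define S where "S k = {t \<in> {a<..<b}. X t \<ge> real k + 1}" for k :: nat
  have Sm[measurable]: "S k \<in> sets lborel" for k unfolding S_def by measurable
  define c where "c k = ennreal (exp (2 * (real k + 2)))" for k :: nat
  have pt: "ennreal (exp (2 * X t)) * indicator {a<..<b} t
     \<le> ennreal (exp 2) * indicator {a<..<b} t + (\<Sum>k. c k * indicator (S k) t)" for t
  proof (cases "t \<in> {a<..<b}")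
    case False then show ?thesis by simp
  next
    case tI: True
    show ?thesis
    proof (cases "X t < 1")
      case True
      then have "exp (2 * X t) \<le> exp 2" by simp
      then show ?thesis using tI by (simp add: ennreal_leI add_increasing2)
    next
      case False
      define k where "k = nat (floor (X t)) - 1"
      have k1: "real k + 1 \<le> X t" and k2: "X t \<le> real k + 2"
        using False unfolding k_def by (auto simp: of_nat_diff) linarith+
      have "ennreal (exp (2 * X t)) \<le> c k * indicator (S k) t"
        using k1 k2 tI by (auto simp: S_def c_def intro!: ennreal_leI)
      also have "\<dots> \<le> (\<Sum>k. c k * indicator (S k) t)"
        by (rule ennreal_le_suminf)
      finally show ?thesis using tI by (simp add: add_increasing)
    qed
  qed
  have "(\<integral>\<^sup>+t\<in>{a<..<b}. ennreal (exp (2 * cmod (f t - avg f a b))) \<partial>lborel)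
     \<le> (\<integral>\<^sup>+t. ennreal (exp 2) * indicator {a<..<b} t + (\<Sum>k. c k * indicator (S k) t) \<partial>lborel)"
    using pt unfolding X_def by (intro nn_integral_mono) auto
  also have "\<dots> = ennreal (exp 2) * ennreal (b - a) + (\<Sum>k. c k * emeasure lborel (S k))"
  proof -
    have e: "(\<integral>\<^sup>+t. c k * indicator (S k) t \<partial>lborel) = c k * emeasure lborel (S k)" for k
      by (rule nn_integral_cmult_indicator[OF Sm])
    show ?thesis
      using ab by (simp add: nn_integral_add nn_integral_suminf e nn_integral_cmult_indicator)
  qed
  also have "\<dots> \<le> ennreal (exp 2) * ennreal (b - a) + (\<Sum>k. ennreal (C0 * (b - a) * exp (-2) ^ k))"
  proof (intro add_mono order.refl suminf_le)
    fix k :: nat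
    have "emeasure lborel (S k) \<le> ennreal (C0 * (b-a) * exp (-4*(real k + 1)))"
      unfolding S_def X_def by (rule jn_tail[OF JN fB bm ab]) simp
    then have "c k * emeasure lborel (S k)
        \<le> c k * ennreal (C0 * (b-a) * exp (-4*(real k + 1)))"
      by (rule mult_left_mono) simp
    also have "\<dots> = ennreal (C0 * (b - a) * exp (-2) ^ k)"
    proof -
      have "exp (2 * (real k + 2)) * (C0 * (b-a) * exp (-4*(real k + 1))) = C0 * (b - a) * exp (-2) ^ k"
      proof -
        have h1: "exp (-2) ^ k = exp (real k * (-2))" by (rule exp_of_nat_mult[symmetric])
        have h2: "exp (2 * (real k + 2)) * exp (-4*(real k + 1)) = exp (real k * (-2))"
          by (simp only: mult_exp_exp) (simp add: algebra_simps)
        show ?thesis using h1 h2 by (simp only: ac_simps)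
      qed
      then show ?thesis using C0 ab by (simp add: c_def ennreal_mult[symmetric])
    qed
    finally show "c k * emeasure lborel (S k) \<le> ennreal (C0 * (b - a) * exp (-2) ^ k)" .
  qed auto
  also have "(\<Sum>k. ennreal (C0 * (b - a) * exp (-2) ^ k)) = ennreal (\<Sum>k. C0 * (b - a) * exp (-2) ^ k)"
    using C0 ab by (intro suminf_ennreal2) (auto intro!: summable_mult summable_geometric)
  also have "(\<Sum>k. C0 * (b - a) * exp (-2) ^ k) = C0 * (b - a) / (1 - exp (-2))"
    by (subst suminf_mult) (auto simp: suminf_geometric intro!: summable_geometric)
  also have "ennreal (exp 2) * ennreal (b - a) + ennreal (C0 * (b - a) / (1 - exp (-2)))
      = ennreal ((b-a) * (exp 2 + C0 / (1 - exp (-2))))"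
    using ab C0 by (simp add: ennreal_mult[symmetric] ennreal_plus[symmetric] algebra_simps del: ennreal_plus)
  finally show ?thesis .
qed




definition clampM :: "real \<Rightarrow> real \<Rightarrow> real" where
  "clampM M x = max (-M) (min M x)"

lemma soft_mono:
  assumes "0 \<le> M" "M \<le> M'"
  shows "\<bar>(x - clampM M' x) - (y - clampM M' y)\<bar> \<le> \<bar>(x - clampM M x) - (y - clampM M y)\<bar>"
  using assms unfolding clampM_def by (auto simp: max_def min_def abs_if)

lemma energy_prod:
  fixes f :: "real \<Rightarrow> complex"
  assumes [measurable]: "f \<in> borel_measurable lborel"
  shows "Bp_energy p f = (\<integral>\<^sup>+z. ennreal (cmod (f (fst z) - f (snd z)) powr p / \<bar>fst z - snd z\<bar>\<^sup>2) \<partial>(lborel \<Otimes>\<^sub>M lborel))"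
  unfolding Bp_energy_def
  by (subst lborel.nn_integral_fst[symmetric]) (auto)




lemma trunc_small:
  fixes u0 :: "real \<Rightarrow> complex"
  assumes um[measurable]: "u0 \<in> borel_measurable lborel" and fin: "Bp_energy p u0 < \<infinity>"
    and re: "\<And>t. Im (u0 t) = 0" and p: "p > 0" and eps: "0 < \<epsilon>"
  shows "\<exists>M::nat. Bp_energy p (\<lambda>t. u0 t - of_real (clampM (real M) (Re (u0 t)))) < \<epsilon>"
proof -
  define g where "g i t = u0 t - of_real (clampM (real i) (Re (u0 t)))" for i :: nat and t
  have gre: "g i t = of_real (Re (u0 t) - clampM (real i) (Re (u0 t)))" for i t
    using re[of t] unfolding g_def by (simp add: complex_eq_iff)
  have gm[measurable]: "g i \<in> borel_measurable lborel" for i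
    unfolding g_def clampM_def by measurable
  define F where "F i z = ennreal (cmod (g i (fst z) - g i (snd z)) powr p / \<bar>fst z - snd z\<bar>\<^sup>2)" for i z
  have Fm[measurable]: "F i \<in> borel_measurable (lborel \<Otimes>\<^sub>M lborel)" for i
    unfolding F_def by measurable
  have EF: "Bp_energy p (g i) = integral\<^sup>N (lborel \<Otimes>\<^sub>M lborel) (F i)" for i
    unfolding F_def by (rule energy_prod[OF gm])
  have g0: "g 0 = u0"
    unfolding g_def clampM_def by (auto simp: fun_eq_iff complex_eq_iff re)
  have mono: "F (Suc i) z \<le> F i z" for i z
  proof -
    have "cmod (g (Suc i) (fst z) - g (Suc i) (snd z)) \<le> cmod (g i (fst z) - g i (snd z))"
      unfolding gre of_real_diff[symmetric] norm_of_real
      by (rule soft_mono) auto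
    then have "cmod (g (Suc i) (fst z) - g (Suc i) (snd z)) powr p \<le> cmod (g i (fst z) - g i (snd z)) powr p"
      using p by (intro powr_mono2) auto
    then show ?thesis unfolding F_def
      by (intro ennreal_leI divide_right_mono) auto
  qed
  have inf0: "(INF i. F i z) = 0" for z
  proof -
    obtain i :: nat where i: "real i \<ge> max \<bar>Re (u0 (fst z))\<bar> \<bar>Re (u0 (snd z))\<bar>"
      using real_arch_simple by blast
    have cl: "clampM M x = x" if "\<bar>x\<bar> \<le> M" for M x
      using that unfolding clampM_def by (simp add: max_def min_def abs_le_iff)
    have "\<bar>Re (u0 (fst z))\<bar> \<le> real i" "\<bar>Re (u0 (snd z))\<bar> \<le> real i" using i by auto
    then have "g i (fst z) = 0" "g i (snd z) = 0"
      unfolding gre by (simp_all add: cl)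
    then have "F i z = 0" unfolding F_def using p by simp
    moreover have "(INF i. F i z) \<le> F i z" by (rule INF_lower) simp
    ultimately show ?thesis by simp
  qed
  have "(\<integral>\<^sup>+ z. (INF i. F i z) \<partial>(lborel \<Otimes>\<^sub>M lborel)) = (INF i. integral\<^sup>N (lborel \<Otimes>\<^sub>M lborel) (F i))"
  proof (rule nn_integral_monotone_convergence_INF_AE')
    show "integral\<^sup>N (lborel \<Otimes>\<^sub>M lborel) (F 0) < \<infinity>"
      using fin EF[of 0] g0 by simp
  qed (auto intro: mono)
  then have "(INF i. integral\<^sup>N (lborel \<Otimes>\<^sub>M lborel) (F i)) < \<epsilon>"
    using inf0 eps by simp
  then obtain i where "integral\<^sup>N (lborel \<Otimes>\<^sub>M lborel) (F i) < \<epsilon>"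
    by (auto simp: INF_less_iff)
  then show ?thesis using EF[of i] unfolding g_def by (intro exI[of _ i]) simp
qed




lemma powr_sum_le:
  fixes A B p :: real
  assumes "A \<ge> 0" "B \<ge> 0" "p > 0"
  shows "(A + B) powr p \<le> 2 powr p * (A powr p + B powr p)"
proof -
  have "(A + B) powr p \<le> (2 * max A B) powr p"
    using assms by (intro powr_mono2) auto
  also have "\<dots> = 2 powr p * max A B powr p"
    using assms by (simp add: powr_mult)
  also have "max A B powr p \<le> A powr p + B powr p"
    using assms by (auto simp: max_def)
  finally show ?thesis using assms by (simp add: mult_left_mono)
qed

lemma energy_diff_fin:
  fixes f g :: "real \<Rightarrow> complex"
  assumes [measurable]: "f \<in> borel_measurable lborel" "g \<in> borel_measurable lborel"
    and ff: "Bp_energy p f < \<infinity>" and gf: "Bp_energy p g < \<infinity>" and p: "p > 0"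
  shows "Bp_energy p (\<lambda>t. f t - g t) < \<infinity>"
proof -
  have "Bp_energy p (\<lambda>t. f t - g t) = (\<integral>\<^sup>+z. ennreal (cmod ((f (fst z) - g (fst z)) - (f (snd z) - g (snd z))) powr p / \<bar>fst z - snd z\<bar>\<^sup>2) \<partial>(lborel \<Otimes>\<^sub>M lborel))"
    by (rule energy_prod) measurable
  also have "\<dots> \<le> (\<integral>\<^sup>+z. ennreal (2 powr p) * ennreal (cmod (f (fst z) - f (snd z)) powr p / \<bar>fst z - snd z\<bar>\<^sup>2)
        + ennreal (2 powr p) * ennreal (cmod (g (fst z) - g (snd z)) powr p / \<bar>fst z - snd z\<bar>\<^sup>2) \<partial>(lborel \<Otimes>\<^sub>M lborel))"
  proof (intro nn_integral_mono)
    fix z :: "real \<times> real"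
    define A where "A = cmod (f (fst z) - f (snd z))"
    define B where "B = cmod (g (fst z) - g (snd z))"
    have "cmod ((f (fst z) - g (fst z)) - (f (snd z) - g (snd z))) \<le> A + B"
      unfolding A_def B_def
      using norm_triangle_ineq4[of "f (fst z) - f (snd z)" "g (fst z) - g (snd z)"] by (simp add: algebra_simps)
    then have "cmod ((f (fst z) - g (fst z)) - (f (snd z) - g (snd z))) powr p \<le> (A + B) powr p"
      using p by (intro powr_mono2) auto
    also have "\<dots> \<le> 2 powr p * (A powr p + B powr p)"
      using p by (intro powr_sum_le) (auto simp: A_def B_def)
    finally have "cmod ((f (fst z) - g (fst z)) - (f (snd z) - g (snd z))) powr p / \<bar>fst z - snd z\<bar>\<^sup>2
       \<le> 2 powr p * (A powr p / \<bar>fst z - snd z\<bar>\<^sup>2) + 2 powr p * (B powr p / \<bar>fst z - snd z\<bar>\<^sup>2)"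
      by (simp add: divide_right_mono add_divide_distrib[symmetric] distrib_left[symmetric])
    then show "ennreal (cmod ((f (fst z) - g (fst z)) - (f (snd z) - g (snd z))) powr p / \<bar>fst z - snd z\<bar>\<^sup>2)
       \<le> ennreal (2 powr p) * ennreal (A powr p / \<bar>fst z - snd z\<bar>\<^sup>2) + ennreal (2 powr p) * ennreal (B powr p / \<bar>fst z - snd z\<bar>\<^sup>2)"
      by (simp add: ennreal_mult[symmetric] ennreal_plus[symmetric] del: ennreal_plus)
  qed
  also have "\<dots> = ennreal (2 powr p) * Bp_energy p f + ennreal (2 powr p) * Bp_energy p g"
    by (simp add: nn_integral_add nn_integral_cmult energy_prod)
  also have "\<dots> < \<infinity>" using ff gf by (simp add: ennreal_mult_less_top less_top)
  finally show ?thesis .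
qed

lemma norm_to_energy:
  assumes fin: "Bp_energy p f < \<infinity>" and p: "p > 0" and nb: "Bp_norm p f \<le> \<beta>"
  shows "Bp_energy p f \<le> ennreal (\<beta> powr p)"
proof -
  define e where "e = enn2real (Bp_energy p f)"
  have e0: "e \<ge> 0" by (simp add: e_def)
  have eq: "Bp_energy p f = ennreal e" using fin unfolding e_def by (simp add: less_top)
  have "e powr (1/p) \<le> \<beta>" using nb by (simp add: Bp_norm_def e_def)
  then have "(e powr (1/p)) powr p \<le> \<beta> powr p"
    using p e0 by (intro powr_mono2) auto
  then have "e \<le> \<beta> powr p" using p e0 by (simp add: powr_powr)
  then show ?thesis using eq by (simp add: ennreal_leI)
qed




lemma avg_norm_le:
  fixes f :: "real \<Rightarrow> complex"
  assumes fi: "set_integrable lborel {a<..<b} f" and ab: "a < b"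
  shows "ennreal (cmod (avg f a b)) \<le> ennreal (1/(b-a)) * (\<integral>\<^sup>+t\<in>{a<..<b}. ennreal (cmod (f t)) \<partial>lborel)"
proof -
  have "ennreal (cmod (LINT s:{a<..<b}|lborel. f s)) \<le> (\<integral>\<^sup>+s. ennreal (norm (indicator {a<..<b} s *\<^sub>R f s)) \<partial>lborel)"
    unfolding set_lebesgue_integral_def
    by (rule integral_norm_bound_ennreal) (use fi in \<open>simp add: set_integrable_def\<close>)
  also have "\<dots> = (\<integral>\<^sup>+t\<in>{a<..<b}. ennreal (cmod (f t)) \<partial>lborel)"
    by (intro nn_integral_cong) (auto split: split_indicator)
  finally have bnd: "ennreal (cmod (LINT s:{a<..<b}|lborel. f s)) \<le> (\<integral>\<^sup>+t\<in>{a<..<b}. ennreal (cmod (f t)) \<partial>lborel)" .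
  have "ennreal (cmod (avg f a b)) = ennreal (1/(b-a)) * ennreal (cmod (LINT s:{a<..<b}|lborel. f s))"
    using ab unfolding avg_def by (simp add: norm_divide ennreal_mult[symmetric] of_real_diff[symmetric] del: of_real_diff)
  also have "\<dots> \<le> ennreal (1/(b-a)) * (\<integral>\<^sup>+t\<in>{a<..<b}. ennreal (cmod (f t)) \<partial>lborel)"
    by (intro mult_left_mono bnd) auto
  finally show ?thesis .
qed

lemma avg_add:
  fixes f g :: "real \<Rightarrow> complex"
  assumes "set_integrable lborel {a<..<b} f" "set_integrable lborel {a<..<b} g"
  shows "avg (\<lambda>t. f t + g t) a b = avg f a b + avg g a b"
  unfolding avg_def using assms by (simp add: set_integral_add add_divide_distrib)

lemma avg_sub_const:
  fixes f :: "real \<Rightarrow> complex"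
  assumes fi: "set_integrable lborel {a<..<b} f" and ab: "a < b"
  shows "avg (\<lambda>t. f t - c) a b = avg f a b - c"
proof -
  have ci: "set_integrable lborel {a<..<b} (\<lambda>s. c)"
    using ab by (simp add: set_integrable_def)
  have "(LINT s:{a<..<b}|lborel. (f s - c)) = (LINT s:{a<..<b}|lborel. f s) - (LINT s:{a<..<b}|lborel. c)"
    by (rule set_integral_diff(2)[OF fi ci])
  also have "(LINT s:{a<..<b}|lborel. c) = of_real (b - a) * c"
    using ab by (simp add: set_integral_const scaleR_conv_of_real)
  finally show ?thesis
    using ab unfolding avg_def by (simp add: field_simps of_real_diff[symmetric] del: of_real_diff)
qed

lemma avg_step:
  fixes u :: "real \<Rightarrow> complex"
  assumes um[measurable]: "u \<in> borel_measurable lborel"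
    and ui: "\<And>a b. set_integrable lborel {a<..<b} u"
    and osc: "\<And>a b. a < b \<Longrightarrow> (\<integral>\<^sup>+t\<in>{a<..<b}. ennreal (cmod (u t - avg u a b)) \<partial>lborel) \<le> ennreal ((b-a)*B)"
    and B: "B \<ge> 0"
    and ab: "a < b" and sub: "a' \<le> a" "b \<le> b'" and len: "b' - a' \<le> 2*(b-a)"
  shows "cmod (avg u a b - avg u a' b') \<le> 2*B"
proof -
  define c where "c = avg u a' b'"
  have a'b': "a' < b'" using ab sub by auto
  have "ennreal (cmod (avg u a b - c)) = ennreal (cmod (avg (\<lambda>t. u t - c) a b))"
    using avg_sub_const[OF ui ab] by simp
  also have "\<dots> \<le> ennreal (1/(b-a)) * (\<integral>\<^sup>+t\<in>{a<..<b}. ennreal (cmod (u t - c)) \<partial>lborel)"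
    by (rule avg_norm_le[OF _ ab]) (use set_integral_diff(1)[OF ui[of a b], of "\<lambda>_. c"] ab in \<open>simp add: set_integrable_def\<close>)
  also have "\<dots> \<le> ennreal (1/(b-a)) * (\<integral>\<^sup>+t\<in>{a'<..<b'}. ennreal (cmod (u t - c)) \<partial>lborel)"
    using sub by (intro mult_left_mono nn_integral_mono) (auto split: split_indicator)
  also have "\<dots> \<le> ennreal (1/(b-a)) * ennreal ((b'-a')*B)"
    unfolding c_def by (intro mult_left_mono osc a'b') auto
  also have "\<dots> = ennreal ((b'-a') * B / (b-a))"
    using ab a'b' B by (simp add: ennreal_mult[symmetric])
  finally have "cmod (avg u a b - c) \<le> (b'-a') * B / (b-a)"
    using ab a'b' B by (subst (asm) ennreal_le_iff) auto
  also have "\<dots> \<le> 2*B"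
  proof -
    have "(b'-a') * B \<le> (2*(b-a)) * B" using len B by (rule mult_right_mono)
    then show ?thesis using ab by (simp add: field_simps)
  qed
  finally show ?thesis unfolding c_def .
qed




definition Tseq :: "real \<Rightarrow> nat \<Rightarrow> real" where
  "Tseq B k = 2^k * exp (2 * real k * B - 2^k / 2)"

lemma Tseq_summable:
  assumes "B \<ge> 0" shows "summable (Tseq B)"
proof -
  obtain N :: nat where N: "real N \<ge> 4*B + 2 * ln 4" using real_arch_simple by blast
  show ?thesis
  proof (rule summable_ratio_test[of "1/2" N])
    fix n assume n: "n \<ge> N"
    have "n < 2^n" by (rule less_exp)
    then have "real n \<le> 2^n" by (metis less_imp_le of_nat_le_iff of_nat_numeral of_nat_power)
    then have "(2::real)^n \<ge> 4*B + 2 * ln 4" using N n by (smt (verit, ccfv_SIG) of_nat_le_iff)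
    then have "2*B - 2^n/2 \<le> - ln 4" by simp
    then have e: "exp (2*B - 2^n/2) \<le> 1/4"
    proof -
      have "exp (- ln 4) = (1/4::real)" by (simp add: exp_minus inverse_eq_divide)
      then show ?thesis using \<open>2*B - 2^n/2 \<le> - ln 4\<close> by (metis exp_le_cancel_iff)
    qed
    have "Tseq B (Suc n) = 2 * exp (2*B - 2^n/2) * Tseq B n"
    proof -
      have ex: "2 * real (Suc n) * B - 2^(Suc n) / 2 = (2*B - 2^n/2) + (2 * real n * B - 2^n / 2)"
        by (simp add: algebra_simps)
      show ?thesis unfolding Tseq_def ex mult_exp_exp[symmetric] by (simp add: algebra_simps)
    qed
    also have "\<dots> \<le> 2 * (1/4) * Tseq B n"
      using e by (intro mult_right_mono mult_left_mono) (auto simp: Tseq_def)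
    finally show "norm (Tseq B (Suc n)) \<le> 1/2 * norm (Tseq B n)"
      by (simp add: Tseq_def)
  qed simp
qed




lemma chain:
  fixes u :: "real \<Rightarrow> complex"
  assumes um[measurable]: "u \<in> borel_measurable lborel"
    and ui: "\<And>a b. set_integrable lborel {a<..<b} u"
    and osc: "\<And>a b. a < b \<Longrightarrow> (\<integral>\<^sup>+t\<in>{a<..<b}. ennreal (cmod (u t - avg u a b)) \<partial>lborel) \<le> ennreal ((b-a)*B)"
    and B: "B \<ge> 0" and y: "y > 0"
  shows "cmod (avg u (x - 2^k*y) (x + 2^k*y) - avg u (x-y) (x+y)) \<le> 2 * real k * B"
proof (induction k)
  case 0 then show ?case by simp
next
  case (Suc k)
  have st: "cmod (avg u (x - 2^k*y) (x + 2^k*y) - avg u (x - 2^Suc k*y) (x + 2^Suc k*y)) \<le> 2*B"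
    by (rule avg_step[OF um ui osc B]) (use y in \<open>auto simp: algebra_simps\<close>)
  have "cmod (avg u (x - 2^Suc k*y) (x + 2^Suc k*y) - avg u (x-y) (x+y))
     \<le> cmod (avg u (x - 2^k*y) (x + 2^k*y) - avg u (x - 2^Suc k*y) (x + 2^Suc k*y))
       + cmod (avg u (x - 2^k*y) (x + 2^k*y) - avg u (x-y) (x+y))"
    using norm_triangle_ineq4[of "avg u (x - 2^k*y) (x + 2^k*y) - avg u (x-y) (x+y)" "avg u (x - 2^k*y) (x + 2^k*y) - avg u (x - 2^Suc k*y) (x + 2^Suc k*y)"]
    by (simp add: add.commute)
  also have "\<dots> \<le> 2*B + 2 * real k * B" using st Suc by simp
  finally show ?case by (simp add: algebra_simps)
qed




lemma poisson:
  fixes u \<phi> :: "real \<Rightarrow> complex"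
  assumes um[measurable]: "u \<in> borel_measurable lborel"
    and ui: "\<And>a b. set_integrable lborel {a<..<b} u"
    and osc: "\<And>a b. a < b \<Longrightarrow> (\<integral>\<^sup>+t\<in>{a<..<b}. ennreal (cmod (u t - avg u a b)) \<partial>lborel) \<le> ennreal ((b-a)*B)"
    and B: "B \<ge> 0"
    and expb: "\<And>a b. a < b \<Longrightarrow> (\<integral>\<^sup>+t\<in>{a<..<b}. ennreal (exp (cmod (u t - avg u a b))) \<partial>lborel) \<le> ennreal ((b-a)*K)"
    and K: "K \<ge> 0" and C: "C > 0" and \<phi>m[measurable]: "\<phi> \<in> borel_measurable lborel"
    and \<phi>b: "\<And>x. cmod (\<phi> x) \<le> C * exp (- \<bar>x\<bar>)" and y: "y > 0"
  shows "(\<integral>\<^sup>+ t. ennreal (cmod (\<phi> ((x - t) / y)) / y * exp (cmod (u t - avg u (x - y) (x + y)))) \<partial>lborel)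
     \<le> ennreal (2*C*K*exp(1/2) * suminf (Tseq B))"
proof -
  define I where "I k = {x - 2^k*y <..< x + 2^k*y}" for k :: nat
  define A where "A k = I k - (if k = 0 then {} else I (k-1))" for k
  define F where "F t = ennreal (cmod (\<phi> ((x - t) / y)) / y * exp (cmod (u t - avg u (x - y) (x + y))))" for t
  have Fm[measurable]: "F \<in> borel_measurable lborel" unfolding F_def by measurable
  have Im[measurable]: "I k \<in> sets lborel" for k unfolding I_def by simp
  have Im': "I k \<in> sets borel" for k unfolding I_def by simp
  have Am[measurable]: "A k \<in> sets lborel" for k unfolding A_def by (auto intro!: sets.Diff Im')
  have Imono: "I j \<subseteq> I k" if "j \<le> k" for j k
  proof -
    have "(2::real)^j \<le> 2^k" using that by (intro power_increasing) auto
    then have "2^j*y \<le> 2^k*y" using y by (intro mult_right_mono) auto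
    then show ?thesis unfolding I_def by auto
  qed
  have disj: "disjoint_family A"
  proof (unfold disjoint_family_on_def, intro ballI impI)
    fix j k :: nat assume "j \<noteq> k"
    moreover have "A j \<inter> A k = {}" if "j < k" for j k
    proof -
      have "I j \<subseteq> I (k-1)" using that by (intro Imono) auto
      moreover have "A j \<subseteq> I j" unfolding A_def by auto
      ultimately have "A j \<subseteq> I (k-1)" by blast
      then show ?thesis using that unfolding A_def by auto
    qed
    ultimately show "A j \<inter> A k = {}" by (metis Int_commute linorder_neqE_nat)
  qed
  have cover: "(\<Union>k. A k) = UNIV"
  proof (intro set_eqI iffI)
    fix t :: real
    obtain n :: nat where n: "\<bar>x - t\<bar> / y < 2^n" using real_arch_pow[of 2 "\<bar>x - t\<bar> / y"] by auto
    have "t \<in> I n" using n y unfolding I_def by (auto simp: field_simps abs_less_iff)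
    define m where "m = (LEAST k. t \<in> I k)"
    have tm: "t \<in> I m" unfolding m_def by (rule LeastI) fact
    have "m = 0 \<or> t \<notin> I (m-1)"
      using not_less_Least[of "m-1" "\<lambda>k. t \<in> I k"] unfolding m_def[symmetric] by auto
    then have "t \<in> A m" using tm unfolding A_def by auto
    then show "t \<in> (\<Union>k. A k)" by auto
  qed simp
  have perk: "(\<integral>\<^sup>+t\<in>A k. F t \<partial>lborel) \<le> ennreal (2*C*K*exp(1/2) * Tseq B k)" for k
  proof -
    define ak where "ak = avg u (x - 2^k*y) (x + 2^k*y)"
    define a0 where "a0 = avg u (x - y) (x + y)"
    define c where "c = C * exp (1/2 - 2^k/2) * exp (2 * real k * B) / y"
    have c0: "c \<ge> 0" using C y by (simp add: c_def)
    have ch: "cmod (ak - a0) \<le> 2 * real k * B"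
      unfolding ak_def a0_def by (rule chain[OF um ui osc B y])
    have pt: "F t * indicator (A k) t \<le> ennreal c * (ennreal (exp (cmod (u t - ak))) * indicator (I k) t)" for t
    proof (cases "t \<in> A k")
      case False then show ?thesis by simp
    next
      case True
      then have tI: "t \<in> I k" unfolding A_def by auto
      have dist: "\<bar>x - t\<bar> / y \<ge> 2^k/2 - 1/2"
      proof (cases "k = 0")
        case True then show ?thesis using y by simp
      next
        case False
        then have "t \<notin> I (k-1)" using \<open>t \<in> A k\<close> unfolding A_def by auto
        then have "\<bar>x - t\<bar> \<ge> 2^(k-1)*y" unfolding I_def by (auto simp: abs_if split: if_splits)
        moreover have "(2::real)^k = 2 * 2^(k-1)" using False by (metis power_minus_mult neq0_conv power_one_right mult.commute)
        ultimately show ?thesis using y by (simp add: field_simps)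
      qed
      have w: "cmod (\<phi> ((x - t) / y)) \<le> C * exp (1/2 - 2^k/2)"
      proof -
        have "cmod (\<phi> ((x - t) / y)) \<le> C * exp (- \<bar>(x - t) / y\<bar>)" by (rule \<phi>b)
        also have "\<bar>(x - t) / y\<bar> = \<bar>x - t\<bar> / y" using y by simp
        also have "C * exp (- (\<bar>x - t\<bar> / y)) \<le> C * exp (1/2 - 2^k/2)"
          using dist C by (intro mult_left_mono) auto
        finally show ?thesis .
      qed
      have e: "exp (cmod (u t - a0)) \<le> exp (cmod (u t - ak)) * exp (2 * real k * B)"
      proof -
        have "cmod (u t - a0) \<le> cmod (u t - ak) + cmod (ak - a0)"
          using norm_triangle_ineq[of "u t - ak" "ak - a0"] by simp
        then have "cmod (u t - a0) \<le> cmod (u t - ak) + 2 * real k * B" using ch by simp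
        then show ?thesis by (simp add: mult_exp_exp)
      qed
      have "cmod (\<phi> ((x - t) / y)) / y * exp (cmod (u t - a0))
          \<le> (C * exp (1/2 - 2^k/2) / y) * (exp (cmod (u t - ak)) * exp (2 * real k * B))"
        using w e y C by (intro mult_mono divide_right_mono) auto
      also have "\<dots> = c * exp (cmod (u t - ak))" by (simp add: c_def)
      finally have "cmod (\<phi> ((x - t) / y)) / y * exp (cmod (u t - a0)) \<le> c * exp (cmod (u t - ak))" .
      then show ?thesis using True tI c0 unfolding F_def a0_def
        by (simp add: ennreal_mult[symmetric] ennreal_leI)
    qed
    have "(\<integral>\<^sup>+t\<in>A k. F t \<partial>lborel) \<le> (\<integral>\<^sup>+t. ennreal c * (ennreal (exp (cmod (u t - ak))) * indicator (I k) t) \<partial>lborel)"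
      by (intro nn_integral_mono pt)
    also have "\<dots> = ennreal c * (\<integral>\<^sup>+t\<in>I k. ennreal (exp (cmod (u t - ak))) \<partial>lborel)"
      by (simp add: nn_integral_cmult)
    also have "\<dots> \<le> ennreal c * ennreal (((x + 2^k*y) - (x - 2^k*y)) * K)"
      unfolding I_def ak_def by (intro mult_left_mono expb) (use y in auto)
    also have "\<dots> = ennreal (2*C*K*exp(1/2) * Tseq B k)"
    proof -
      have eqr: "c * (((x + 2^k*y) - (x - 2^k*y)) * K) = 2*C*K*exp(1/2) * Tseq B k"
      proof -
        have "exp (1/2 - 2^k/2) * exp (2 * real k * B) = exp (1/2) * exp (2 * real k * B - 2^k/2)"
          by (simp add: mult_exp_exp algebra_simps)
        then show ?thesis using y unfolding c_def Tseq_def by (simp add: field_simps)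
      qed
      have L: "((x + 2^k*y) - (x - 2^k*y)) * K \<ge> 0" using y K by simp
      have "ennreal c * ennreal (((x + 2^k*y) - (x - 2^k*y)) * K) = ennreal (c * (((x + 2^k*y) - (x - 2^k*y)) * K))"
        using c0 L by (rule ennreal_mult[symmetric])
      then show ?thesis using eqr by metis
    qed
    finally show ?thesis .
  qed
  have sT: "summable (\<lambda>k. 2*C*K*exp(1/2) * Tseq B k)"
    by (intro summable_mult Tseq_summable B)
  have "(\<integral>\<^sup>+ t. F t \<partial>lborel) = (\<integral>\<^sup>+t\<in>(\<Union>k. A k). F t \<partial>lborel)"
    using cover by simp
  also have "\<dots> = (\<Sum>k. \<integral>\<^sup>+t\<in>A k. F t \<partial>lborel)"
    by (rule nn_integral_disjoint_family[OF Fm Am disj])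
  also have "\<dots> \<le> (\<Sum>k. ennreal (2*C*K*exp(1/2) * Tseq B k))"
    by (intro suminf_le perk) auto
  also have "\<dots> = ennreal (\<Sum>k. 2*C*K*exp(1/2) * Tseq B k)"
    using C K by (intro suminf_ennreal2 sT) (auto simp: Tseq_def)
  also have "(\<Sum>k. 2*C*K*exp(1/2) * Tseq B k) = 2*C*K*exp(1/2) * suminf (Tseq B)"
    by (intro suminf_mult Tseq_summable B)
  finally show ?thesis unfolding F_def .
qed




lemma bp_int_gen:
  fixes f :: "real \<Rightarrow> complex"
  assumes fm[measurable]: "f \<in> borel_measurable lborel" and p: "p > 1" and fin: "Bp_energy p f < \<infinity>"
  shows "set_integrable lborel {a<..<b} f"
proof -
  define e where "e = enn2real (Bp_energy p f)"
  have e0: "e \<ge> 0" by (simp add: e_def)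
  have eq: "Bp_energy p f = ennreal e" using fin unfolding e_def by (simp add: less_top)
  define b0 where "b0 = (e + 1) powr (1/p)"
  have b0: "b0 > 0" using e0 by (simp add: b0_def)
  have "b0 powr p = e + 1" using e0 p by (simp add: b0_def powr_powr)
  then have "Bp_energy p f \<le> ennreal (b0 powr p)" using eq by (simp add: ennreal_leI)
  then show ?thesis by (rule bp_int[OF fm p b0])
qed

lemma exp_sum_le: "exp ((x::real) + y) \<le> exp (2*x) + exp (2*y)"
proof -
  have "0 \<le> (exp x - exp y)^2" by simp
  then have "2 * (exp x * exp y) \<le> exp x ^ 2 + exp y ^ 2" by (simp add: power2_eq_square algebra_simps)
  moreover have "exp x ^ 2 = exp (2*x)" "exp y ^ 2 = exp (2*y)"
    by (simp_all add: power2_eq_square mult_exp_exp)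
  moreover have "exp (x + y) = exp x * exp y" by (simp add: exp_add)
  moreover have "exp x * exp y > 0" by simp
  ultimately show ?thesis by linarith
qed

lemma clamp_bound: "0 \<le> M \<Longrightarrow> \<bar>clampM M x\<bar> \<le> M"
  unfolding clampM_def by (simp add: abs_le_iff)

lemma avg_bounded:
  fixes h :: "real \<Rightarrow> complex"
  assumes hi: "set_integrable lborel {a<..<b} h" and ab: "a < b" and hb: "\<And>t. cmod (h t) \<le> M"
  shows "cmod (avg h a b) \<le> M"
proof -
  have M0: "M \<ge> 0" using hb[of 0] by (meson norm_ge_zero order_trans)
  have "ennreal (cmod (avg h a b)) \<le> ennreal (1/(b-a)) * (\<integral>\<^sup>+t\<in>{a<..<b}. ennreal (cmod (h t)) \<partial>lborel)"
    by (rule avg_norm_le[OF hi ab])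
  also have "\<dots> \<le> ennreal (1/(b-a)) * (\<integral>\<^sup>+t. ennreal M * indicator {a<..<b} t \<partial>lborel)"
    using hb by (intro mult_left_mono nn_integral_mono) (auto split: split_indicator intro: ennreal_leI)
  also have "\<dots> = ennreal (1/(b-a)) * (ennreal M * ennreal (b - a))"
    using ab by (simp add: nn_integral_cmult_indicator)
  also have "\<dots> = ennreal M"
    using ab M0 by (simp add: ennreal_mult[symmetric])
  finally show ?thesis using M0 by (subst (asm) ennreal_le_iff) auto
qed




lemma ennreal_sum3: "0 \<le> x \<Longrightarrow> 0 \<le> y \<Longrightarrow> 0 \<le> z \<Longrightarrow> ennreal x + ennreal y + ennreal z = ennreal (x + y + z)"
  by (simp add: ennreal_plus)

lemma ennreal_sum2: "0 \<le> x \<Longrightarrow> 0 \<le> y \<Longrightarrow> ennreal x + ennreal y = ennreal (x + y)"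
  by (simp add: ennreal_plus)

lemma key_u:
  fixes u u0 g h :: "real \<Rightarrow> complex" and M :: real
  assumes p: "p > 1" and JN: "JN_constants C0 CJN"
    and u0m[measurable]: "u0 \<in> borel_measurable lborel" and u0E: "Bp_energy p u0 < \<infinity>"
    and gm[measurable]: "g \<in> borel_measurable lborel" and gE: "Bp_energy p g \<le> ennreal ((CJN/4) powr p)"
    and hb: "\<And>t. cmod (h t) \<le> M" and gh: "\<And>t. u0 t = g t + h t"
    and uB: "in_Bp p u" and un: "Bp_norm p (u - u0) \<le> CJN/4"
  shows "u \<in> borel_measurable lborel"
    and "set_integrable lborel {a<..<b} u"
    and "a < b \<Longrightarrow> (\<integral>\<^sup>+t\<in>{a<..<b}. ennreal (cmod (u t - avg u a b)) \<partial>lborel) \<le> ennreal ((b-a)*(2*(CJN/4) + 2*M))"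
    and "a < b \<Longrightarrow> (\<integral>\<^sup>+t\<in>{a<..<b}. ennreal (exp (cmod (u t - avg u a b))) \<partial>lborel)
           \<le> ennreal ((b-a)*(2 * exp (2*M) * (exp 2 + C0 / (1 - exp (-2)))))"
proof -
  have C0: "C0 > 0" and CJN: "CJN > 0" using JN by (auto simp: JN_constants_def)
  define \<beta> where "\<beta> = CJN/4"
  have bpos: "\<beta> > 0" using CJN by (simp add: \<beta>_def)
  have M0: "M \<ge> 0" using hb[of 0] by (meson norm_ge_zero order_trans)
  show um[measurable]: "u \<in> borel_measurable lborel" using uB by (simp add: in_Bp_def)
  have uE: "Bp_energy p u < \<infinity>" using uB by (simp add: in_Bp_def)
  define v where "v t = u t - u0 t" for t
  have vm[measurable]: "v \<in> borel_measurable lborel" unfolding v_def by measurable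
  have uv: "u - u0 = v" unfolding v_def by (simp add: fun_eq_iff)
  have vfin: "Bp_energy p v < \<infinity>"
    unfolding v_def by (rule energy_diff_fin) (use uE u0E p in auto)
  have vE: "Bp_energy p v \<le> ennreal (\<beta> powr p)"
    by (rule norm_to_energy[OF vfin]) (use p un uv \<beta>_def in auto)
  have gE': "Bp_energy p g \<le> ennreal (\<beta> powr p)" using gE by (simp add: \<beta>_def)
  have vi: "set_integrable lborel {a<..<b} v" for a b by (rule bp_int[OF vm p bpos vE])
  have gi: "set_integrable lborel {a<..<b} g" for a b by (rule bp_int[OF gm p bpos gE'])
  have u0i: "set_integrable lborel {a<..<b} u0" for a b by (rule bp_int_gen[OF u0m p u0E])
  show ui: "set_integrable lborel {a<..<b} u" for a b by (rule bp_int_gen[OF um p uE])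
  have hi: "set_integrable lborel {a<..<b} h" for a b
  proof -
    have "h = (\<lambda>t. u0 t - g t)" using gh by (simp add: fun_eq_iff algebra_simps)
    then show ?thesis using set_integral_diff(1)[OF u0i gi] by simp
  qed
  have vBMO: "in_BMO v" "bmo_norm v \<le> ennreal \<beta>" by (rule bp_BMO[OF vm p bpos vE])+
  have gBMO: "in_BMO g" "bmo_norm g \<le> ennreal \<beta>" by (rule bp_BMO[OF gm p bpos gE'])+
  have udec: "u t = v t + (g t + h t)" for t using gh[of t] unfolding v_def by simp
  have pw: "cmod (u t - avg u a b) \<le> cmod (v t - avg v a b) + cmod (g t - avg g a b) + 2*M" if ab: "a < b" for a b t
  proof -
    have "avg u a b = avg (\<lambda>t. v t + (g t + h t)) a b" using udec by metis
    also have "\<dots> = avg v a b + avg (\<lambda>t. g t + h t) a b"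
      by (rule avg_add[OF vi set_integral_add(1)[OF gi hi]])
    also have "avg (\<lambda>t. g t + h t) a b = avg g a b + avg h a b" by (rule avg_add[OF gi hi])
    finally have "u t - avg u a b = (v t - avg v a b) + (g t - avg g a b) + (h t - avg h a b)"
      using udec[of t] by simp
    then have "cmod (u t - avg u a b) \<le> cmod (v t - avg v a b) + cmod (g t - avg g a b) + cmod (h t - avg h a b)"
      by (metis norm_triangle_le order_refl add_mono norm_triangle_ineq)
    also have "cmod (h t - avg h a b) \<le> 2*M"
      using norm_triangle_ineq4[of "h t" "avg h a b"] hb[of t] avg_bounded[OF hi ab hb] by simp
    finally show ?thesis by simp
  qed
  show "(\<integral>\<^sup>+t\<in>{a<..<b}. ennreal (cmod (u t - avg u a b)) \<partial>lborel) \<le> ennreal ((b-a)*(2*(CJN/4) + 2*M))"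
    if ab: "a < b"
  proof -
    have "(\<integral>\<^sup>+t\<in>{a<..<b}. ennreal (cmod (u t - avg u a b)) \<partial>lborel)
       \<le> (\<integral>\<^sup>+t. ennreal (cmod (v t - avg v a b)) * indicator {a<..<b} t + ennreal (cmod (g t - avg g a b)) * indicator {a<..<b} t
             + ennreal (2*M) * indicator {a<..<b} t \<partial>lborel)"
    proof (intro nn_integral_mono)
      fix t
      show "ennreal (cmod (u t - avg u a b)) * indicator {a<..<b} t
         \<le> ennreal (cmod (v t - avg v a b)) * indicator {a<..<b} t + ennreal (cmod (g t - avg g a b)) * indicator {a<..<b} t
             + ennreal (2*M) * indicator {a<..<b} t"
        using pw[OF ab, of t] M0
        by (cases "t \<in> {a<..<b}") (simp_all add: ennreal_plus[symmetric] del: ennreal_plus)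
    qed
    also have "\<dots> = (\<integral>\<^sup>+t\<in>{a<..<b}. ennreal (cmod (v t - avg v a b)) \<partial>lborel) + (\<integral>\<^sup>+t\<in>{a<..<b}. ennreal (cmod (g t - avg g a b)) \<partial>lborel)
           + ennreal (2*M) * ennreal (b - a)"
      using ab by (simp add: nn_integral_add nn_integral_cmult_indicator)
    also have "\<dots> \<le> ennreal ((b-a)*\<beta>) + ennreal ((b-a)*\<beta>) + ennreal (2*M) * ennreal (b - a)"
      by (intro add_mono order.refl bp_osc[OF vm p bpos vE ab] bp_osc[OF gm p bpos gE' ab])
    also have "\<dots> = ennreal ((b-a)*\<beta> + (b-a)*\<beta> + (2*M) * (b - a))"
    proof -
      have e: "ennreal (2*M) * ennreal (b-a) = ennreal ((2*M)*(b-a))"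
        by (rule ennreal_mult[symmetric]) (use M0 ab in auto)
      show ?thesis unfolding e by (rule ennreal_sum3) (use ab bpos M0 in auto)
    qed
    also have "(b-a)*\<beta> + (b-a)*\<beta> + (2*M) * (b - a) = (b-a)*(2*(CJN/4) + 2*M)"
      by (simp add: \<beta>_def field_simps)
    finally show ?thesis .
  qed
  show "(\<integral>\<^sup>+t\<in>{a<..<b}. ennreal (exp (cmod (u t - avg u a b))) \<partial>lborel)
           \<le> ennreal ((b-a)*(2 * exp (2*M) * (exp 2 + C0 / (1 - exp (-2)))))" if ab: "a < b"
  proof -
    define K0 where "K0 = exp 2 + C0 / (1 - exp (-2))"
    have K0: "K0 \<ge> 0" using C0 by (simp add: K0_def)
    have bmv: "bmo_norm v \<le> ennreal (CJN/4)" "bmo_norm g \<le> ennreal (CJN/4)" using vBMO gBMO by (simp_all add: \<beta>_def)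
    have "(\<integral>\<^sup>+t\<in>{a<..<b}. ennreal (exp (cmod (u t - avg u a b))) \<partial>lborel)
       \<le> (\<integral>\<^sup>+t. ennreal (exp (2*M)) * (ennreal (exp (2 * cmod (v t - avg v a b))) * indicator {a<..<b} t)
             + ennreal (exp (2*M)) * (ennreal (exp (2 * cmod (g t - avg g a b))) * indicator {a<..<b} t) \<partial>lborel)"
    proof (intro nn_integral_mono)
      fix t
      have "exp (cmod (u t - avg u a b)) \<le> exp ((cmod (v t - avg v a b) + cmod (g t - avg g a b)) + 2*M)"
        using pw[OF ab, of t] by simp
      also have "\<dots> = exp (2*M) * exp (cmod (v t - avg v a b) + cmod (g t - avg g a b))"
        by (simp add: exp_add)
      also have "\<dots> \<le> exp (2*M) * (exp (2 * cmod (v t - avg v a b)) + exp (2 * cmod (g t - avg g a b)))"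
        by (intro mult_left_mono exp_sum_le) auto
      finally have r: "exp (cmod (u t - avg u a b)) \<le> exp (2*M) * exp (2 * cmod (v t - avg v a b)) + exp (2*M) * exp (2 * cmod (g t - avg g a b))"
        by (simp add: distrib_left)
      show "ennreal (exp (cmod (u t - avg u a b))) * indicator {a<..<b} t
         \<le> ennreal (exp (2*M)) * (ennreal (exp (2 * cmod (v t - avg v a b))) * indicator {a<..<b} t)
             + ennreal (exp (2*M)) * (ennreal (exp (2 * cmod (g t - avg g a b))) * indicator {a<..<b} t)"
        using r by (cases "t \<in> {a<..<b}") (simp_all add: ennreal_mult[symmetric] ennreal_plus[symmetric] del: ennreal_plus)
    qed
    also have "\<dots> = ennreal (exp (2*M)) * (\<integral>\<^sup>+t\<in>{a<..<b}. ennreal (exp (2 * cmod (v t - avg v a b))) \<partial>lborel)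
           + ennreal (exp (2*M)) * (\<integral>\<^sup>+t\<in>{a<..<b}. ennreal (exp (2 * cmod (g t - avg g a b))) \<partial>lborel)"
      by (simp add: nn_integral_add nn_integral_cmult)
    also have "\<dots> \<le> ennreal (exp (2*M)) * ennreal ((b-a)*K0) + ennreal (exp (2*M)) * ennreal ((b-a)*K0)"
      unfolding K0_def
      by (intro add_mono mult_left_mono exp_int[OF JN vBMO(1) bmv(1) ab] exp_int[OF JN gBMO(1) bmv(2) ab]) auto
    also have "\<dots> = ennreal (exp (2*M) * ((b-a)*K0) + exp (2*M) * ((b-a)*K0))"
    proof -
      have e: "ennreal (exp (2*M)) * ennreal ((b-a)*K0) = ennreal (exp (2*M) * ((b-a)*K0))"
        by (rule ennreal_mult[symmetric]) (use K0 ab in auto)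
      show ?thesis unfolding e by (rule ennreal_sum2) (use ab K0 in auto)
    qed
    also have "exp (2*M) * ((b-a)*K0) + exp (2*M) * ((b-a)*K0) = (b-a)*(2 * exp (2*M) * K0)"
      by (simp add: algebra_simps)
    finally show ?thesis unfolding K0_def .
  qed
qed




theorem lemma2p6:
  fixes p C0 CJN C :: real and \<phi> u0 :: "real \<Rightarrow> complex"
  assumes "p > 1"
    and "JN_constants C0 CJN"
    and "\<phi> \<in> borel_measurable lborel"
    and "C > 0" and "\<And>x. cmod (\<phi> x) \<le> C * exp (- \<bar>x\<bar>)"
    and "in_Bp p u0" and "\<And>t. Im (u0 t) = 0"
  shows "(\<exists>K > 0. \<forall>u. in_Bp p u \<and> Bp_norm p (u - u0) \<le> CJN / 4 \<longrightarrow>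
            (\<forall>a b. a < b \<longrightarrow>
               (\<integral>\<^sup>+ t\<in>{a<..<b}. ennreal (exp (cmod (u t - avg u a b))) \<partial>lborel) / ennreal (b - a)
                 \<le> ennreal K))
       \<and> (\<exists>K' > 0. \<forall>u. in_Bp p u \<and> Bp_norm p (u - u0) \<le> CJN / 4 \<longrightarrow>
            (\<forall>x y. y > 0 \<longrightarrow>
               (\<integral>\<^sup>+ t. ennreal (cmod (\<phi> ((x - t) / y)) / y
                   * exp (cmod (u t - avg u (x - y) (x + y)))) \<partial>lborel) \<le> ennreal K'))"
proof -
  note p = assms(1) and JN = assms(2) and \<phi>m = assms(3) and Cpos = assms(4) and \<phi>b = assms(5)
    and u0B = assms(6) and re = assms(7)
  have C0: "C0 > 0" and CJN: "CJN > 0" using JN by (auto simp: JN_constants_def)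
  have u0m[measurable]: "u0 \<in> borel_measurable lborel" and u0E: "Bp_energy p u0 < \<infinity>"
    using u0B by (auto simp: in_Bp_def)
  have "\<exists>M::nat. Bp_energy p (\<lambda>t. u0 t - of_real (clampM (real M) (Re (u0 t)))) < ennreal ((CJN/4) powr p)"
    by (rule trunc_small[OF u0m u0E re]) (use p CJN in auto)
  then obtain M :: nat where Msm: "Bp_energy p (\<lambda>t. u0 t - of_real (clampM (real M) (Re (u0 t)))) < ennreal ((CJN/4) powr p)"
    by blast
  define h where "h t = complex_of_real (clampM (real M) (Re (u0 t)))" for t
  define g where "g t = u0 t - h t" for t
  have gm[measurable]: "g \<in> borel_measurable lborel" unfolding g_def h_def clampM_def by measurable
  have gE: "Bp_energy p g \<le> ennreal ((CJN/4) powr p)" using Msm unfolding g_def h_def by simp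
  have hb: "cmod (h t) \<le> real M" for t unfolding h_def using clamp_bound[of "real M" "Re (u0 t)"] by simp
  have gh: "u0 t = g t + h t" for t unfolding g_def by simp
  define K0 where "K0 = exp 2 + C0 / (1 - exp (-2))"
  define K where "K = 2 * exp (2 * real M) * K0"
  define B where "B = 2*(CJN/4) + 2 * real M"
  have K0: "K0 > 0"
  proof -
    have "exp (-2::real) < 1" by simp
    then have "C0 / (1 - exp (-2)) > 0" using C0 by simp
    then show ?thesis unfolding K0_def by (simp add: add_pos_pos)
  qed
  have Kpos: "K > 0" using K0 by (simp add: K_def)
  have B0: "B \<ge> 0" using CJN by (simp add: B_def)
  note key = key_u[OF p JN u0m u0E gm gE hb gh]
  have P1: "\<forall>u. in_Bp p u \<and> Bp_norm p (u - u0) \<le> CJN / 4 \<longrightarrow>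
            (\<forall>a b. a < b \<longrightarrow>
               (\<integral>\<^sup>+ t\<in>{a<..<b}. ennreal (exp (cmod (u t - avg u a b))) \<partial>lborel) / ennreal (b - a)
                 \<le> ennreal K)"
  proof (intro allI impI)
    fix u :: "real \<Rightarrow> complex" and a b :: real
    assume uH: "in_Bp p u \<and> Bp_norm p (u - u0) \<le> CJN / 4" and ab: "a < b"
    have "(\<integral>\<^sup>+ t\<in>{a<..<b}. ennreal (exp (cmod (u t - avg u a b))) \<partial>lborel) \<le> ennreal ((b-a)*K)"
      using key(4)[of u a b] uH ab unfolding K_def K0_def by auto
    also have "ennreal ((b-a)*K) = ennreal (b - a) * ennreal K"
      using ab Kpos by (simp add: ennreal_mult)
    finally show "(\<integral>\<^sup>+ t\<in>{a<..<b}. ennreal (exp (cmod (u t - avg u a b))) \<partial>lborel) / ennreal (b - a) \<le> ennreal K"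
      using ab by (intro divide_le_posI_ennreal) auto
  qed
  define K' where "K' = 2*C*K*exp(1/2) * suminf (Tseq B) + 1"
  have K'pos: "K' > 0"
  proof -
    have "suminf (Tseq B) \<ge> 0"
      by (intro suminf_nonneg Tseq_summable B0) (simp add: Tseq_def)
    then show ?thesis using Cpos Kpos unfolding K'_def
      by (simp add: add_nonneg_pos)
  qed
  have P2: "\<forall>u. in_Bp p u \<and> Bp_norm p (u - u0) \<le> CJN / 4 \<longrightarrow>
            (\<forall>x y. y > 0 \<longrightarrow>
               (\<integral>\<^sup>+ t. ennreal (cmod (\<phi> ((x - t) / y)) / y
                   * exp (cmod (u t - avg u (x - y) (x + y)))) \<partial>lborel) \<le> ennreal K')"
  proof (intro allI impI)
    fix u :: "real \<Rightarrow> complex" and x y :: real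
    assume uH: "in_Bp p u \<and> Bp_norm p (u - u0) \<le> CJN / 4" and y: "y > 0"
    have um: "u \<in> borel_measurable lborel" using key(1)[of u] uH by auto
    have ui: "\<And>a b. set_integrable lborel {a<..<b} u" using key(2)[of u] uH by auto
    have osc: "\<And>a b. a < b \<Longrightarrow> (\<integral>\<^sup>+t\<in>{a<..<b}. ennreal (cmod (u t - avg u a b)) \<partial>lborel) \<le> ennreal ((b-a)*B)"
      using key(3)[of u] uH unfolding B_def by auto
    have expb: "\<And>a b. a < b \<Longrightarrow> (\<integral>\<^sup>+t\<in>{a<..<b}. ennreal (exp (cmod (u t - avg u a b))) \<partial>lborel) \<le> ennreal ((b-a)*K)"
      using key(4)[of u] uH unfolding K_def K0_def by auto
    have "(\<integral>\<^sup>+ t. ennreal (cmod (\<phi> ((x - t) / y)) / y * exp (cmod (u t - avg u (x - y) (x + y)))) \<partial>lborel)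
       \<le> ennreal (2*C*K*exp(1/2) * suminf (Tseq B))"
      by (rule poisson[OF um ui osc B0 expb _ Cpos \<phi>m \<phi>b y]) (use Kpos in auto)
    also have "\<dots> \<le> ennreal K'" unfolding K'_def by (intro ennreal_leI) simp
    finally show "(\<integral>\<^sup>+ t. ennreal (cmod (\<phi> ((x - t) / y)) / y * exp (cmod (u t - avg u (x - y) (x + y)))) \<partial>lborel) \<le> ennreal K'" .
  qed
  show ?thesis using P1 P2 Kpos K'pos by blast
qed


end
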